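(* Let $M\in\Lambda_{\mathrm{NF}}$ have blueprint $\alpha$, and suppose $\alpha\rhd^{b^m_0}_{\omega_m}\cdots\rhd^{b^m_{p_m}}_{\omega_m}\ \cdots\ \rhd^{b^1_0}_{\omega_1}\cdots\rhd^{b^1_{p_1}}_{\omega_1}\emptyset_{\mathbb B}$ (through some intermediate blueprints). Then for every strictly increasing sequence of variables $Y=(y_1,\dots,y_m)$ with $\Omega(Y)=(\omega_1,\dots,\omega_m)$, there exists a term $N$ with the same domain, the same blueprint and the same type as $M$ such that $\mathrm{Free}(N)=Y$ and $\{b : N|_b=y_i\}=\{b^i_0,\dots,b^i_{p_i}\}$ for each $i$.
   Context: Formulas are built from atoms with $\to$. Let $\mathcal X$ be a countably infinite set of variables with an injective map $\mathcal O:\mathcal X\to\mathbb N$; $x<y$ iff $\mathcal O(x)<\mathcal O(y)$. Terms are pure $\lambda$-terms over $\mathcal X$, not identified up to $\alpha$-conversion; no two $\lambda$'s bind the same variable and no variable is both free and bound. $\mathrm{Free}(M)$ is the strictly increasing sequence of free variables of $M$. HRM terms: variables; $\lambda x.M$ with $M$ HRM and $x$ the greatest free variable of $M$; $(MN)$ with $M,N$ HRM and every free variable of $M$ $\le$ some free variable of $N$. Fix $\Omega$ from variables to formulas with each $\Omega^{-1}(\phi)$ infinite; $\Omega(y_1,\dots,y_m)=(\Omega(y_1),\dots,\Omega(y_m))$. Typing: $x:\Omega(x)$; $\lambda x.M:\chi\to\psi$ if $x:\chi$, $M:\psi$, $\lambda x.M$ HRM; $(MN):\psi$ if $M:\chi\to\psi$,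 $N:\chi$, $(MN)$ HRM. $\Lambda_{\mathrm{NF}}$ is the set of typed $\beta$-normal terms. Addresses are finite sequences of positive integers with prefix order $\le$, concatenation $\cdot$, empty address $\varepsilon$. Terms are identified with trees: $x$ is $\varepsilon\mapsto x$; $\lambda x.M$ maps $\varepsilon$ to $\lambda x$ with subtree $M$ at $(1)$; $(M_1M_2)$ maps $\varepsilon$ to $@$ with subtrees $M_1,M_2$ at $(1),(2)$; $M|_a$ is the subterm at $a$, $\mathrm{dom}(M)$ its set of addresses. For a partial tree $\pi$, $\pi|_a$ is $c\mapsto\pi(a\cdot c)$. Let $\mathfrak S$ consist of all formulas (arity 0) and symbols $@_\phi$ (arity 2). A blueprint is a finite partial tree with values in $\mathfrak S$ such that if $\alpha(a)=@_\phi$ then $\alpha|_{a\cdot(1)},\alpha|_{a\cdot(2)}$ are non-empty. Notation: $\emptyset_{\mathbb B}$ empty blueprint; $\phi$ denotes $\varepsilon\mapsto\phi$; $@_\phi(\alpha_1,\alpha_2)$ ($\alpha_i$ non-empty) has root $@_\phi$ and $\alpha_i$ at $(i)$; for pairwise incomparable $\bar a=(a_1,\dots,a_k)$, $*_{\bar a}(\alpha_1,\dots,\alpha_k)$ is the blueprint of minimal domain with restriction $\alpha_i$ at $a_i$; $*(\alpha_1,\dots,\alpha_k)=*_{((1),\dots,(k))}(\dots)$. The stable part of $M\in\Lambda_{\mathrm{NF}}$ is the set of $a\in\mathrm{dom}(M)$ with $\mathrm{Free}(M|_a)\subseteq\mathrm{Free}(M)$ and $M|_a$ a variable or an application. The blueprint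 of $M$ maps each $a$ in the stable part to $\psi$ if $M|_a$ is a variable of type $\psi$, and to $@_\psi$ if $M|_a$ is an application of type $\psi$. Extraction $\alpha\rhd^a_\phi\beta$: (1) $\phi\rhd^\varepsilon_\phi\emptyset_{\mathbb B}$; (2) if $\alpha\rhd^a_\phi\beta$ ($\gamma,\alpha$ non-empty) then $@_\psi(\gamma,\alpha)\rhd^{(2)\cdot a}_\phi*(\gamma,\beta)$; (3) if $\alpha\rhd^a_\phi\beta$, $b\ne\varepsilon$, $(b,c_1,\dots,c_k)$ pairwise incomparable, then $*_{(b,c_1,\dots,c_k)}(\alpha,\gamma_1,\dots,\gamma_k)\rhd^{b\cdot a}_\phi*_{(b,c_1,\dots,c_k)}(\beta,\gamma_1,\dots,\gamma_k)$. *)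

theory Defs
  imports Main "HOL-Library.Sublist"
begin

text \<open>Formulas over an arbitrary type of atoms, built with implication.
  Variables are natural numbers; the order on variables is the order of nat
  (i.e. the injection O into nat is the identity).\<close>

datatype 'a form = Atom 'a | Imp "'a form" "'a form"

type_synonym var = nat

datatype trm = Var var | Lam var trm | App trm trm

fun fvs :: "trm \<Rightarrow> var set" where
  "fvs (Var x) = {x}"
| "fvs (Lam x M) = fvs M - {x}"
| "fvs (App M N) = fvs M \<union> fvs N"

fun bvs :: "trm \<Rightarrow> var list" where
  "bvs (Var x) = []"
| "bvs (Lam x M) = x # bvs M"
| "bvs (App M N) = bvs M @ bvs N"

definition is_term :: "trm \<Rightarrow> bool" where
  "is_term M \<longleftrightarrow> distinct (bvs M) \<and> set (bvs M) \<inter> fvs M = {}"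

definition Free :: "trm \<Rightarrow> var list" where
  "Free M = sorted_list_of_set (fvs M)"

fun hrm :: "trm \<Rightarrow> bool" where
  "hrm (Var x) = True"
| "hrm (Lam x M) = (hrm M \<and> x \<in> fvs M \<and> (\<forall>y\<in>fvs M. y \<le> x))"
| "hrm (App M N) = (hrm M \<and> hrm N \<and> (\<forall>x\<in>fvs M. \<exists>y\<in>fvs N. x \<le> y))"

inductive has_type :: "(var \<Rightarrow> 'a form) \<Rightarrow> trm \<Rightarrow> 'a form \<Rightarrow> bool" for \<Omega> where
  tVar: "has_type \<Omega> (Var x) (\<Omega> x)"
| tLam: "has_type \<Omega> M \<psi> \<Longrightarrow> hrm (Lam x M) \<Longrightarrow> has_type \<Omega> (Lam x M) (Imp (\<Omega> x) \<psi>)"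
| tApp: "has_type \<Omega> M (Imp \<chi> \<psi>) \<Longrightarrow> has_type \<Omega> N \<chi> \<Longrightarrow> hrm (App M N) \<Longrightarrow> has_type \<Omega> (App M N) \<psi>"

fun beta_normal :: "trm \<Rightarrow> bool" where
  "beta_normal (Var x) = True"
| "beta_normal (Lam x M) = beta_normal M"
| "beta_normal (App (Lam x M) N) = False"
| "beta_normal (App M N) = (beta_normal M \<and> beta_normal N)"

definition LambdaNF :: "(var \<Rightarrow> 'a form) \<Rightarrow> trm set" where
  "LambdaNF \<Omega> = {M. is_term M \<and> beta_normal M \<and> (\<exists>\<phi>. has_type \<Omega> M \<phi>)}"

type_synonym addr = "nat list"

definition is_addr :: "addr \<Rightarrow> bool" where
  "is_addr a \<longleftrightarrow> (\<forall>i\<in>set a. 0 < i)"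

fun subt :: "trm \<Rightarrow> addr \<Rightarrow> trm option" where
  "subt M [] = Some M"
| "subt (Lam x M) (i # a) = (if i = 1 then subt M a else None)"
| "subt (App M N) (i # a) = (if i = 1 then subt M a else if i = 2 then subt N a else None)"
| "subt (Var x) (i # a) = None"

definition tdom :: "trm \<Rightarrow> addr set" where
  "tdom M = {a. subt M a \<noteq> None}"

datatype 'a sym = F "'a form" | At "'a form"

type_synonym 'a bp = "addr \<Rightarrow> 'a sym option"

definition bdom :: "'a bp \<Rightarrow> addr set" where
  "bdom \<alpha> = {a. \<alpha> a \<noteq> None}"

definition restr :: "'a bp \<Rightarrow> addr \<Rightarrow> 'a bp" where
  "restr \<alpha> a = (\<lambda>c. \<alpha> (a @ c))"

definition is_blueprint :: "'a bp \<Rightarrow> bool" where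
  "is_blueprint \<alpha> \<longleftrightarrow> finite (bdom \<alpha>) \<and> (\<forall>a\<in>bdom \<alpha>. is_addr a) \<and>
     (\<forall>a \<phi>. \<alpha> a = Some (At \<phi>) \<longrightarrow>
        restr \<alpha> (a @ [1]) \<noteq> Map.empty \<and> restr \<alpha> (a @ [2]) \<noteq> Map.empty)"

definition bleaf :: "'a form \<Rightarrow> 'a bp" where
  "bleaf \<phi> = (\<lambda>c. if c = [] then Some (F \<phi>) else None)"

definition pairwise_incomparable :: "addr list \<Rightarrow> bool" where
  "pairwise_incomparable as \<longleftrightarrow>
     (\<forall>i<length as. \<forall>j<length as. i \<noteq> j \<longrightarrow> \<not> prefix (as ! i) (as ! j))"

text \<open>star [(a1,alpha1),...,(ak,alphak)] is the blueprint of minimal domain whose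
  restriction at ai is alphai (for pairwise incomparable ai).\<close>
fun bstar :: "(addr \<times> 'a bp) list \<Rightarrow> 'a bp" where
  "bstar [] c = None"
| "bstar ((a, \<alpha>) # ps) c = (if prefix a c then \<alpha> (drop (length a) c) else bstar ps c)"

definition bapp :: "'a form \<Rightarrow> 'a bp \<Rightarrow> 'a bp \<Rightarrow> 'a bp" where
  "bapp \<psi> \<alpha>1 \<alpha>2 = (\<lambda>c. if c = [] then Some (At \<psi>) else bstar [([1], \<alpha>1), ([2], \<alpha>2)] c)"

definition blueprint :: "(var \<Rightarrow> 'a form) \<Rightarrow> trm \<Rightarrow> 'a bp" where
  "blueprint \<Omega> M = (\<lambda>a. case subt M a of
       None \<Rightarrow> None
     | Some (Var x) \<Rightarrow> if fvs (Var x) \<subseteq> fvs M then Some (F (\<Omega> x)) else None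
     | Some (Lam x P) \<Rightarrow> None
     | Some (App P Q) \<Rightarrow> if fvs (App P Q) \<subseteq> fvs M
                          then Some (At (THE \<psi>. has_type \<Omega> (App P Q) \<psi>)) else None)"

inductive extr :: "'a bp \<Rightarrow> addr \<Rightarrow> 'a form \<Rightarrow> 'a bp \<Rightarrow> bool" where
  ex_leaf: "extr (bleaf \<phi>) [] \<phi> Map.empty"
| ex_app: "extr \<alpha> a \<phi> \<beta> \<Longrightarrow> is_blueprint \<gamma> \<Longrightarrow> \<gamma> \<noteq> Map.empty \<Longrightarrow> \<alpha> \<noteq> Map.empty \<Longrightarrow>
           extr (bapp \<psi> \<gamma> \<alpha>) (2 # a) \<phi> (bstar [([1], \<gamma>), ([2], \<beta>)])"
| ex_ctx: "extr \<alpha> a \<phi> \<beta> \<Longrightarrow> b \<noteq> [] \<Longrightarrow> is_addr b \<Longrightarrow> \<forall>c\<in>set cs. is_addr c \<Longrightarrow>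
           pairwise_incomparable (b # cs) \<Longrightarrow> length gs = length cs \<Longrightarrow>
           \<forall>g\<in>set gs. is_blueprint g \<Longrightarrow>
           extr (bstar ((b, \<alpha>) # zip cs gs)) (b @ a) \<phi> (bstar ((b, \<beta>) # zip cs gs))"

inductive extr_chain :: "'a bp \<Rightarrow> (addr \<times> 'a form) list \<Rightarrow> 'a bp \<Rightarrow> bool" where
  "extr_chain \<alpha> [] \<alpha>"
| "extr \<alpha> a \<phi> \<beta> \<Longrightarrow> extr_chain \<beta> s \<gamma> \<Longrightarrow> extr_chain \<alpha> ((a, \<phi>) # s) \<gamma>"

definition steps :: "nat \<Rightarrow> (nat \<Rightarrow> 'a form) \<Rightarrow> (nat \<Rightarrow> nat) \<Rightarrow> (nat \<Rightarrow> nat \<Rightarrow> addr)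
                      \<Rightarrow> (addr \<times> 'a form) list" where
  "steps m \<omega> p b = concat (map (\<lambda>i. map (\<lambda>j. (b i j, \<omega> i)) [0..<Suc (p i)]) (rev [1..<Suc m]))"

end

theory Submission
  imports Defs "HOL-Library.Infinite_Set"
begin


fun rnF :: "var set \<Rightarrow> (addr \<Rightarrow> var) \<Rightarrow> (var \<Rightarrow> var) \<Rightarrow> trm \<Rightarrow> trm" where
  "rnF FV \<sigma> \<rho> (Var x) = Var (if x \<in> FV then \<sigma> [] else \<rho> x)"
| "rnF FV \<sigma> \<rho> (Lam x P) = Lam (\<rho> x) (rnF FV (\<lambda>c. \<sigma> (1#c)) \<rho> P)"
| "rnF FV \<sigma> \<rho> (App P Q) = App (rnF FV (\<lambda>c. \<sigma> (1#c)) \<rho> P) (rnF FV (\<lambda>c. \<sigma> (2#c)) \<rho> Q)"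

lemma subt_rnF: "subt (rnF FV \<sigma> \<rho> S) c = map_option (rnF FV (\<lambda>d. \<sigma> (c@d)) \<rho>) (subt S c)"
proof (induction S arbitrary: c \<sigma>)
  case (Var x) then show ?case by (cases c) auto
next
  case (Lam x P) then show ?case by (cases c) auto
next
  case (App P Q) then show ?case by (cases c) auto
qed

lemma bvs_rnF: "bvs (rnF FV \<sigma> \<rho> S) = map \<rho> (bvs S)"
  by (induction S arbitrary: \<sigma>) auto

lemma bn_App: "beta_normal (App P Q) = (beta_normal P \<and> beta_normal Q \<and> (\<forall>x R. P \<noteq> Lam x R))"
  by (cases P) auto

lemma rnF_Lam: "(\<forall>x R. rnF FV \<sigma> \<rho> P \<noteq> Lam x R) = (\<forall>x R. P \<noteq> Lam x R)"
  by (cases P) auto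

lemma bn_rnF: "beta_normal (rnF FV \<sigma> \<rho> S) = beta_normal S"
proof (induction S arbitrary: \<sigma>)
  case (App P Q)
  have "beta_normal (rnF FV \<sigma> \<rho> (App P Q)) = (beta_normal (rnF FV (\<lambda>c. \<sigma> (1#c)) \<rho> P) \<and> beta_normal (rnF FV (\<lambda>c. \<sigma> (2#c)) \<rho> Q) \<and> (\<forall>x R. rnF FV (\<lambda>c. \<sigma> (1#c)) \<rho> P \<noteq> Lam x R))"
    by (simp only: rnF.simps bn_App)
  also have "\<dots> = beta_normal (App P Q)" using App by (simp only: bn_App rnF_Lam)
  finally show ?case .
qed auto


definition LF :: "var set \<Rightarrow> trm \<Rightarrow> addr set" where
  "LF FV S = {c. \<exists>x\<in>FV. subt S c = Some (Var x)}"

lemma LF_Var: "LF FV (Var x) = (if x \<in> FV then {[]} else {})"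
  unfolding LF_def
  apply (rule set_eqI) subgoal for c by (cases c) auto done

lemma LF_Lam: "LF FV (Lam x P) = Cons 1 ` LF FV P"
  unfolding LF_def
  apply (rule set_eqI) subgoal for c by (cases c) (auto split: if_splits) done

lemma LF_App: "LF FV (App P Q) = Cons 1 ` LF FV P \<union> Cons 2 ` LF FV Q"
  unfolding LF_def
  apply (rule set_eqI) subgoal for c by (cases c) (auto split: if_splits) done

lemma fvs_rnF:
  assumes "set (bvs S) \<inter> FV = {}" "inj \<rho>" "\<forall>c x. \<sigma> c \<noteq> \<rho> x"
  shows "fvs (rnF FV \<sigma> \<rho> S) = \<sigma> ` LF FV S \<union> \<rho> ` (fvs S - FV)"
  using assms(1,3)
proof (induction S arbitrary: \<sigma>)
  case (Var x)
  then show ?case by (auto simp add: LF_Var)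
next
  case (Lam x P)
  have IH: "fvs (rnF FV (\<lambda>c. \<sigma> (1#c)) \<rho> P) = (\<lambda>c. \<sigma> (1#c)) ` LF FV P \<union> \<rho> ` (fvs P - FV)"
    using Lam by simp
  have xF: "x \<notin> FV" using Lam.prems by auto
  have a: "\<rho> x \<notin> (\<lambda>c. \<sigma> (1#c)) ` LF FV P" 
  proof
    assume "\<rho> x \<in> (\<lambda>c. \<sigma> (1#c)) ` LF FV P"
    then obtain c where "\<rho> x = \<sigma> (1#c)" by blast
    then show False using Lam.prems(2) by metis
  qed
  have b: "\<rho> ` (fvs P - FV) - {\<rho> x} = \<rho> ` (fvs P - {x} - FV)" using assms(2)
    by (auto simp: inj_eq)
  have "fvs (rnF FV \<sigma> \<rho> (Lam x P)) = ((\<lambda>c. \<sigma> (1#c)) ` LF FV P \<union> \<rho> ` (fvs P - FV)) - {\<rho> x}"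
    using IH by simp
  also have "\<dots> = (\<lambda>c. \<sigma> (1#c)) ` LF FV P \<union> \<rho> ` (fvs P - {x} - FV)" using a b by blast
  also have "\<dots> = \<sigma> ` LF FV (Lam x P) \<union> \<rho> ` (fvs (Lam x P) - FV)"
    by (simp add: LF_Lam image_image)
  finally show ?case .
next
  case (App P Q)
  have IH1: "fvs (rnF FV (\<lambda>c. \<sigma> (1#c)) \<rho> P) = (\<lambda>c. \<sigma> (1#c)) ` LF FV P \<union> \<rho> ` (fvs P - FV)"
    using App.IH(1)[of "\<lambda>c. \<sigma> (1#c)"] App.prems by auto
  have IH2: "fvs (rnF FV (\<lambda>c. \<sigma> (2#c)) \<rho> Q) = (\<lambda>c. \<sigma> (2#c)) ` LF FV Q \<union> \<rho> ` (fvs Q - FV)"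
    using App.IH(2)[of "\<lambda>c. \<sigma> (2#c)"] App.prems by auto
  show ?case using IH1 IH2 by (simp add: LF_App image_image image_Un Un_Diff) blast
qed


lemma fvs_subt: "subt S c = Some T \<Longrightarrow> fvs T \<subseteq> fvs S \<union> set (bvs S)"
proof (induction S arbitrary: c)
  case (Var x) then show ?case by (cases c) auto
next
  case (Lam x P) then show ?case by (cases c) (auto split: if_splits)
next
  case (App P Q) then show ?case by (cases c) (fastforce split: if_splits)+
qed

lemma bvs_subt: "subt S c = Some T \<Longrightarrow> set (bvs T) \<subseteq> set (bvs S)"
proof (induction S arbitrary: c)
  case (Var x) then show ?case by (cases c) auto
next
  case (Lam x P) then show ?case by (cases c) (auto split: if_splits)
next
  case (App P Q) then show ?case by (cases c) (fastforce split: if_splits)+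
qed

lemma occ: "x \<in> fvs S \<Longrightarrow> \<exists>c. subt S c = Some (Var x)"
proof (induction S)
  case (Var y) then show ?case by (intro exI[of _ "[]"]) auto
next
  case (Lam y P)
  then obtain c where "subt P c = Some (Var x)" by auto
  then show ?case by (intro exI[of _ "1#c"]) auto
next
  case (App P Q)
  show ?case
  proof (cases "x \<in> fvs P")
    case True
    with App obtain c where "subt P c = Some (Var x)" by auto
    then show ?thesis by (intro exI[of _ "1#c"]) auto
  next
    case False
    with App obtain c where "subt Q c = Some (Var x)" by auto
    then show ?thesis by (intro exI[of _ "2#c"]) auto
  qed
qed

lemma var_free: "subt S c = Some (Var x) \<Longrightarrow> x \<notin> set (bvs S) \<Longrightarrow> x \<in> fvs S"
proof (induction S arbitrary: c)
  case (Var y) then show ?case by (cases c) auto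
next
  case (Lam y P) then show ?case by (cases c) (auto split: if_splits)
next
  case (App P Q) then show ?case by (cases c) (auto split: if_splits)
qed

lemma hrm_subt: "hrm S \<Longrightarrow> subt S c = Some T \<Longrightarrow> hrm T"
proof (induction S arbitrary: c)
  case (Var x) then show ?case by (cases c) auto
next
  case (Lam x P) then show ?case by (cases c) (auto split: if_splits)
next
  case (App P Q) then show ?case by (cases c) (auto split: if_splits)
qed

fun loc :: "trm \<Rightarrow> bool" where
  "loc (Var x) = True"
| "loc (Lam x P) = (x \<in> fvs P \<and> (\<forall>y\<in>fvs P. y \<le> x))"
| "loc (App P Q) = (\<forall>x\<in>fvs P. \<exists>y\<in>fvs Q. x \<le> y)"

lemma hrm_iff: "hrm T \<longleftrightarrow> (\<forall>a S. subt T a = Some S \<longrightarrow> loc S)"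
proof (induction T)
  case (Var x)
  then show ?case by (auto elim!: subt.elims)
next
  case (Lam x P)
  show ?case
  proof
    assume h: "hrm (Lam x P)"
    show "\<forall>a S. subt (Lam x P) a = Some S \<longrightarrow> loc S"
    proof (intro allI impI)
      fix a S assume "subt (Lam x P) a = Some S"
      then show "loc S" using h Lam.IH by (cases a) (auto split: if_splits)
    qed
  next
    assume h: "\<forall>a S. subt (Lam x P) a = Some S \<longrightarrow> loc S"
    have "\<forall>a S. subt P a = Some S \<longrightarrow> loc S"
      using h[rule_format, of "1#_"] by auto
    moreover have "loc (Lam x P)" using h[rule_format, of "[]"] by auto
    ultimately show "hrm (Lam x P)" using Lam.IH by auto
  qed
next
  case (App P Q)
  show ?case
  proof
    assume h: "hrm (App P Q)"
    show "\<forall>a S. subt (App P Q) a = Some S \<longrightarrow> loc S"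
    proof (intro allI impI)
      fix a S assume "subt (App P Q) a = Some S"
      then show "loc S" using h App.IH by (cases a) (auto split: if_splits)
    qed
  next
    assume h: "\<forall>a S. subt (App P Q) a = Some S \<longrightarrow> loc S"
    have "\<forall>a S. subt P a = Some S \<longrightarrow> loc S"
      using h[rule_format, of "1#_"] by auto
    moreover have "\<forall>a S. subt Q a = Some S \<longrightarrow> loc S"
      using h[rule_format, of "2#_"] by auto
    moreover have "loc (App P Q)" using h[rule_format, of "[]"] by auto
    ultimately show "hrm (App P Q)" using App.IH by auto
  qed
qed

lemma BF: "hrm S \<Longrightarrow> G \<inter> set (bvs S) = {} \<Longrightarrow> subt S c = Some T \<Longrightarrow> x \<in> fvs T \<Longrightarrow> x \<notin> fvs S
   \<Longrightarrow> y \<in> fvs T \<Longrightarrow> y \<in> G \<Longrightarrow> y < x"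
proof (induction S arbitrary: c)
  case (Var z) then show ?case by (cases c) auto
next
  case (Lam z P)
  show ?case
  proof (cases c)
    case Nil then show ?thesis using Lam by auto
  next
    case (Cons i c')
    then have i: "i = 1" and sP: "subt P c' = Some T" using Lam.prems by (auto split: if_splits)
    show ?thesis
    proof (cases "x \<in> fvs P")
      case False
      then show ?thesis using Lam.IH[OF _ _ sP] Lam.prems by auto
    next
      case True
      then have xz: "x = z" using Lam.prems by auto
      have "y \<in> fvs P" using fvs_subt[OF sP] Lam.prems by auto
      then have "y \<le> z" using Lam.prems by auto
      moreover have "y \<noteq> z" using Lam.prems by auto
      ultimately show ?thesis using xz by auto
    qed
  qed
next
  case (App P Q)
  show ?case
  proof (cases c)
    case Nil then show ?thesis using App by auto
  next
    case (Cons i c')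
    show ?thesis
    proof (cases "i = 1")
      case True
      then have sP: "subt P c' = Some T" using App.prems Cons by auto
      then show ?thesis using App.IH(1)[OF _ _ sP] App.prems by auto
    next
      case False
      then have sQ: "subt Q c' = Some T" using App.prems Cons by (auto split: if_splits)
      then show ?thesis using App.IH(2)[OF _ _ sQ] App.prems by auto
    qed
  qed
qed


inductive_cases htVar: "has_type \<Omega> (Var x) \<phi>"
inductive_cases htLam: "has_type \<Omega> (Lam x P) \<phi>"
inductive_cases htApp: "has_type \<Omega> (App P Q) \<phi>"

lemma ht_unique: "has_type \<Omega> S \<phi> \<Longrightarrow> has_type \<Omega> S \<psi> \<Longrightarrow> \<phi> = \<psi>"
proof (induction arbitrary: \<psi> rule: has_type.induct)
  case (tVar x) then show ?case by (rule htVar) simp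
next
  case (tLam M \<psi>1 x)
  from tLam.prems obtain \<psi>2 where "has_type \<Omega> M \<psi>2" "\<psi> = Imp (\<Omega> x) \<psi>2" by (rule htLam) simp
  then show ?case using tLam.IH by simp
next
  case (tApp M \<chi> \<psi>1 N)
  from tApp.prems obtain \<chi>' where "has_type \<Omega> M (Imp \<chi>' \<psi>)" by (rule htApp) simp
  from tApp.IH(1)[OF this] show ?case by simp
qed

lemma typed_subt: "has_type \<Omega> S \<phi> \<Longrightarrow> subt S c = Some T \<Longrightarrow> \<exists>\<psi>. has_type \<Omega> T \<psi>"
proof (induction arbitrary: c rule: has_type.induct)
  case (tVar x) then show ?case by (cases c) (auto intro: has_type.intros)
next
  case (tLam M \<psi> x)
  have "has_type \<Omega> (Lam x M) (Imp (\<Omega> x) \<psi>)" using tLam.hyps by (rule has_type.tLam)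
  with tLam show ?case by (cases c) (auto split: if_splits)
next
  case (tApp M \<chi> \<psi> N)
  have "has_type \<Omega> (App M N) \<psi>" using tApp.hyps by (rule has_type.tApp)
  with tApp show ?case by (cases c) (auto split: if_splits)
qed

lemma TY: "has_type \<Omega> S \<phi> \<Longrightarrow> hrm (rnF FV \<sigma> \<rho> S) \<Longrightarrow> (\<forall>x. \<Omega> (\<rho> x) = \<Omega> x) \<Longrightarrow>
  (\<forall>c x. subt S c = Some (Var x) \<longrightarrow> x \<in> FV \<longrightarrow> \<Omega> (\<sigma> c) = \<Omega> x) \<Longrightarrow> has_type \<Omega> (rnF FV \<sigma> \<rho> S) \<phi>"
proof (induction arbitrary: \<sigma> rule: has_type.induct)
  case (tVar x)
  have "has_type \<Omega> (Var (if x \<in> FV then \<sigma> [] else \<rho> x)) (\<Omega> (if x \<in> FV then \<sigma> [] else \<rho> x))"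
    by (rule has_type.tVar)
  moreover have "\<Omega> (if x \<in> FV then \<sigma> [] else \<rho> x) = \<Omega> x" using tVar.prems by (auto dest: spec[of _ "[]"])
  ultimately show ?case by simp
next
  case (tLam M \<psi> x)
  have "has_type \<Omega> (rnF FV (\<lambda>c. \<sigma> (1#c)) \<rho> M) \<psi>"
    using tLam.IH[of "\<lambda>c. \<sigma> (1#c)"] tLam.prems by auto
  then have "has_type \<Omega> (Lam (\<rho> x) (rnF FV (\<lambda>c. \<sigma> (1#c)) \<rho> M)) (Imp (\<Omega> (\<rho> x)) \<psi>)"
    using tLam.prems(1) by (intro has_type.tLam) auto
  then show ?case using tLam.prems(2) by simp
next
  case (tApp M \<chi> \<psi> N)
  have "has_type \<Omega> (rnF FV (\<lambda>c. \<sigma> (1#c)) \<rho> M) (Imp \<chi> \<psi>)"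
    using tApp.IH(1)[of "\<lambda>c. \<sigma> (1#c)"] tApp.prems by auto
  moreover have "has_type \<Omega> (rnF FV (\<lambda>c. \<sigma> (2#c)) \<rho> N) \<chi>"
    using tApp.IH(2)[of "\<lambda>c. \<sigma> (2#c)"] tApp.prems by auto
  ultimately show ?case using tApp.prems(1) by (auto intro: has_type.tApp)
qed




lemma bstar_cons_pre: "bstar ((b,\<alpha>)#r) (b@d) = \<alpha> d" by simp
lemma bstar_cons_npre: "\<not> prefix b d \<Longrightarrow> bstar ((b,\<alpha>)#r) d = bstar r d" by simp

lemma bstar_zip_none: "(\<forall>c\<in>set cs. \<not> prefix c d) \<Longrightarrow> bstar (zip cs gs) d = None"
proof (induction cs arbitrary: gs)
  case Nil then show ?case by simp
next
  case (Cons c cs) then show ?case by (cases gs) auto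
qed

lemma bapp_simps: "bapp \<psi> \<gamma> \<alpha> [] = Some (At \<psi>)" "bapp \<psi> \<gamma> \<alpha> (Suc 0#d) = \<gamma> d"
  "bapp \<psi> \<gamma> \<alpha> (2#d) = \<alpha> d" "k \<noteq> Suc 0 \<Longrightarrow> k \<noteq> 2 \<Longrightarrow> bapp \<psi> \<gamma> \<alpha> (k#d) = None"
  by (auto simp: bapp_def)

lemma bs2_simps: "bstar [([Suc 0],\<gamma>),([2],\<beta>)] [] = None" "bstar [([Suc 0],\<gamma>),([2],\<beta>)] (Suc 0#d) = \<gamma> d"
  "bstar [([Suc 0],\<gamma>),([2],\<beta>)] (2#d) = \<beta> d" "k \<noteq> Suc 0 \<Longrightarrow> k \<noteq> 2 \<Longrightarrow> bstar [([Suc 0],\<gamma>),([2],\<beta>)] (k#d) = None"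
  by auto

lemma E1: "extr \<alpha> c \<phi> \<beta> \<Longrightarrow> \<alpha> c = Some (F \<phi>)"
  by (induction rule: extr.induct) (auto simp: bleaf_def bapp_simps)

lemma E5: "extr \<alpha> c \<phi> \<beta> \<Longrightarrow> \<beta> c = None"
  by (induction rule: extr.induct) auto

lemma E2: "extr \<alpha> c \<phi> \<beta> \<Longrightarrow> \<beta> d \<noteq> None \<Longrightarrow> \<beta> d = \<alpha> d"
proof (induction arbitrary: d rule: extr.induct)
  case (ex_leaf \<phi>) then show ?case by simp
next
  case (ex_app \<alpha> a \<phi> \<beta> \<gamma> \<psi>)
  then show ?case
  proof (cases d)
    case Nil then show ?thesis using ex_app.prems by simp
  next
    case (Cons k d')
    then show ?thesis using ex_app
      by (cases "k = 1"; cases "k = 2") (auto simp: bapp_simps bs2_simps simp del: bstar.simps)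
  qed
next
  case (ex_ctx \<alpha> a \<phi> \<beta> b cs gs)
  show ?case
  proof (cases "prefix b d")
    case True
    then obtain d' where "d = b @ d'" by (auto simp: prefix_def)
    then show ?thesis using ex_ctx by simp
  next
    case False then show ?thesis by simp
  qed
qed

lemma E3: "extr \<alpha> c \<phi> \<beta> \<Longrightarrow> \<alpha> d \<noteq> None \<Longrightarrow> \<beta> d = None \<Longrightarrow>
   d = c \<or> (\<exists>\<psi>. \<alpha> d = Some (At \<psi>) \<and> prefix (d@[2]) c)"
proof (induction arbitrary: d rule: extr.induct)
  case (ex_leaf \<phi>) then show ?case by (auto simp: bleaf_def split: if_splits)
next
  case (ex_app \<alpha> a \<phi> \<beta> \<gamma> \<psi>)
  show ?case
  proof (cases d)
    case Nil then show ?thesis by (simp add: bapp_simps)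
  next
    case (Cons k d')
    show ?thesis
    proof (cases "k = 2")
      case True
      then have "\<alpha> d' \<noteq> None" "\<beta> d' = None" using ex_app.prems Cons by (simp_all add: bapp_simps bs2_simps del: bstar.simps)
      from ex_app.IH[OF this] show ?thesis using Cons True by (auto simp: bapp_simps bs2_simps simp del: bstar.simps)
    next
      case False
      then show ?thesis using ex_app.prems Cons
        by (cases "k = 1") (auto simp: bapp_simps bs2_simps simp del: bstar.simps)
    qed
  qed
next
  case (ex_ctx \<alpha> a \<phi> \<beta> b cs gs)
  show ?case
  proof (cases "prefix b d")
    case True
    then obtain d' where d: "d = b @ d'" by (auto simp: prefix_def)
    then have "\<alpha> d' \<noteq> None" "\<beta> d' = None" using ex_ctx.prems by simp_all
    from ex_ctx.IH[OF this] show ?thesis using d by auto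
  next
    case False then show ?thesis using ex_ctx.prems by simp
  qed
qed

lemma E4: "extr \<alpha> c \<phi> \<beta> \<Longrightarrow> \<alpha> d = Some (At \<psi>) \<Longrightarrow> prefix d c \<Longrightarrow> prefix (d@[2]) c"
proof (induction arbitrary: d rule: extr.induct)
  case (ex_leaf \<phi>) then show ?case by (auto simp: bleaf_def)
next
  case (ex_app \<alpha> a \<phi> \<beta> \<gamma> \<psi>')
  show ?case
  proof (cases d)
    case Nil then show ?thesis by simp
  next
    case (Cons k d')
    then have k: "k = 2" and p: "prefix d' a" using ex_app.prems by auto
    then have "\<alpha> d' = Some (At \<psi>)" using ex_app.prems Cons by (simp add: bapp_simps)
    from ex_app.IH[OF this p] show ?thesis using Cons k by simp
  qed
next
  case (ex_ctx \<alpha> a \<phi> \<beta> b cs gs)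
  show ?case
  proof (cases "prefix b d")
    case True
    then obtain d' where d: "d = b @ d'" by (auto simp: prefix_def)
    then have "\<alpha> d' = Some (At \<psi>)" "prefix d' a" using ex_ctx.prems by simp_all
    from ex_ctx.IH[OF this] show ?thesis using d by simp
  next
    case False
    have "prefix b (b @ a)" by simp
    then have pdb: "prefix d b" using prefix_same_cases[OF ex_ctx.prems(2)] False by blast
    have "\<forall>c\<in>set cs. \<not> prefix c d"
    proof
      fix c assume c: "c \<in> set cs"
      then obtain j where j: "j < length cs" "cs ! j = c" by (auto simp: in_set_conv_nth)
      have H: "\<forall>i<length (b#cs). \<forall>j<length (b#cs). i \<noteq> j \<longrightarrow> \<not> prefix ((b#cs) ! i) ((b#cs) ! j)"
        using ex_ctx.hyps(5) unfolding pairwise_incomparable_def .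
      have "\<not> prefix ((b#cs) ! (Suc j)) ((b#cs) ! 0)"
        using H[rule_format, of "Suc j" 0] j(1) by simp
      then have "\<not> prefix c b" using j by simp
      then show "\<not> prefix c d" using pdb prefix_order.trans by blast
    qed
    then have "bstar (zip cs gs) d = None" by (rule bstar_zip_none)
    then show ?thesis using ex_ctx.prems False by simp
  qed
qed




lemma chain_seq: "extr_chain \<alpha> s \<gamma> \<Longrightarrow> \<exists>bs. length bs = Suc (length s) \<and> bs!0 = \<alpha> \<and> bs!(length s) = \<gamma> \<and>
   (\<forall>k<length s. extr (bs!k) (fst (s!k)) (snd (s!k)) (bs!Suc k))"
proof (induction rule: extr_chain.induct)
  case (1 \<alpha>) then show ?case by (intro exI[of _ "[\<alpha>]"]) auto
next
  case (2 \<alpha> a \<phi> \<beta> s \<gamma>)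
  then obtain bs where bs: "length bs = Suc (length s)" "bs!0 = \<beta>" "bs!(length s) = \<gamma>"
    "\<forall>k<length s. extr (bs!k) (fst (s!k)) (snd (s!k)) (bs!Suc k)" by blast
  show ?case
  proof (intro exI[of _ "\<alpha> # bs"] conjI allI impI)
    fix k assume "k < length ((a,\<phi>)#s)"
    then show "extr ((\<alpha> # bs)!k) (fst (((a,\<phi>)#s)!k)) (snd (((a,\<phi>)#s)!k)) ((\<alpha> # bs)!Suc k)"
      using bs 2 by (cases k) auto
  qed (use bs in auto)
qed

lemma transition: "P (0::nat) \<Longrightarrow> \<not> P n \<Longrightarrow> \<exists>k<n. P k \<and> \<not> P (Suc k)"
proof (induction n)
  case 0 then show ?case by simp
next
  case (Suc n) then show ?case by (cases "P n") (auto intro: less_SucI)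
qed

locale ch =
  fixes bs :: "'a bp list" and s :: "(addr \<times> 'a form) list"
  assumes len: "length bs = Suc (length s)" and lst: "bs ! length s = Map.empty"
    and stp: "\<forall>k<length s. extr (bs!k) (fst (s!k)) (snd (s!k)) (bs!Suc k)"
begin

lemma C1: "k \<le> j \<Longrightarrow> j \<le> length s \<Longrightarrow> (bs!j) d \<noteq> None \<Longrightarrow> (bs!j) d = (bs!k) d"
proof (induction j)
  case 0 then show ?case by simp
next
  case (Suc j)
  have e: "extr (bs!j) (fst (s!j)) (snd (s!j)) (bs!Suc j)" using stp Suc.prems by auto
  have "(bs!Suc j) d = (bs!j) d" using E2[OF e Suc.prems(3)] .
  show ?case
  proof (cases "k = Suc j")
    case True then show ?thesis by simp
  next
    case False
    then show ?thesis using Suc.IH Suc.prems \<open>(bs!Suc j) d = (bs!j) d\<close> by auto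
  qed
qed

lemma C2: "(bs!0) d = Some (F \<phi>) \<Longrightarrow> \<exists>k<length s. fst (s!k) = d"
proof -
  assume h: "(bs!0) d = Some (F \<phi>)"
  have "\<exists>k<length s. (bs!k) d \<noteq> None \<and> \<not> (bs!Suc k) d \<noteq> None"
    by (rule transition[of "\<lambda>k. (bs!k) d \<noteq> None"]) (use h lst in auto)
  then obtain k where k: "k < length s" "(bs!k) d \<noteq> None" "(bs!Suc k) d = None" by auto
  have "(bs!k) d = (bs!0) d" using C1[of 0 k d] k by auto
  then have "(bs!k) d = Some (F \<phi>)" using h by simp
  moreover have e: "extr (bs!k) (fst (s!k)) (snd (s!k)) (bs!Suc k)" using stp k by auto
  ultimately show ?thesis using E3[OF e, of d] k by auto
qed

lemma C4: "k < length s \<Longrightarrow> (bs!0) (fst (s!k)) = Some (F (snd (s!k)))"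
proof -
  assume k: "k < length s"
  have e: "extr (bs!k) (fst (s!k)) (snd (s!k)) (bs!Suc k)" using stp k by auto
  have "(bs!k) (fst (s!k)) = Some (F (snd (s!k)))" using E1[OF e] .
  moreover then have "(bs!k) (fst (s!k)) = (bs!0) (fst (s!k))" using C1[of 0 k] k by auto
  ultimately show ?thesis by simp
qed

lemma C3: "k < j \<Longrightarrow> j < length s \<Longrightarrow> fst (s!k) \<noteq> fst (s!j)"
proof
  assume kj: "k < j" "j < length s" and eq: "fst (s!k) = fst (s!j)"
  have e: "extr (bs!k) (fst (s!k)) (snd (s!k)) (bs!Suc k)" using stp kj by auto
  have n: "(bs!Suc k) (fst (s!k)) = None" using E5[OF e] .
  have e2: "extr (bs!j) (fst (s!j)) (snd (s!j)) (bs!Suc j)" using stp kj by auto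
  have "(bs!j) (fst (s!j)) \<noteq> None" using E1[OF e2] by simp
  then have "(bs!j) (fst (s!j)) = (bs!Suc k) (fst (s!j))" using C1[of "Suc k" j] kj by auto
  then show False using n eq \<open>(bs!j) (fst (s!j)) \<noteq> None\<close> by simp
qed

lemma C5: "(bs!0) a = Some (At \<psi>) \<Longrightarrow>
  \<exists>k0<length s. prefix (a@[2]) (fst (s!k0)) \<and> (\<forall>k<length s. prefix (a@[1]) (fst (s!k)) \<longrightarrow> k0 < k)"
proof -
  assume h: "(bs!0) a = Some (At \<psi>)"
  have "\<exists>k<length s. (bs!k) a \<noteq> None \<and> \<not> (bs!Suc k) a \<noteq> None"
    by (rule transition[of "\<lambda>k. (bs!k) a \<noteq> None"]) (use h lst in auto)
  then obtain k0 where k0: "k0 < length s" "(bs!k0) a \<noteq> None" "(bs!Suc k0) a = None" by auto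
  have At: "(bs!j) a = Some (At \<psi>)" if "j \<le> k0" for j
  proof -
    have "(bs!k0) a = (bs!0) a" using C1[of 0 k0 a] k0 by auto
    moreover have "(bs!k0) a = (bs!j) a" using C1[of j k0 a] k0 that by auto
    ultimately show ?thesis using h by simp
  qed
  have e: "extr (bs!k0) (fst (s!k0)) (snd (s!k0)) (bs!Suc k0)" using stp k0 by auto
  have "a \<noteq> fst (s!k0)" using E1[OF e] At[of k0] by auto
  then have p2: "prefix (a@[2]) (fst (s!k0))" using E3[OF e, of a] k0 by auto
  show ?thesis
  proof (intro exI[of _ k0] conjI allI impI)
    fix k assume k: "k < length s" "prefix (a@[1]) (fst (s!k))"
    show "k0 < k"
    proof (rule ccontr)
      assume "\<not> k0 < k"
      then have "(bs!k) a = Some (At \<psi>)" using At by auto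
      moreover have ek: "extr (bs!k) (fst (s!k)) (snd (s!k)) (bs!Suc k)" using stp k by auto
      moreover have "prefix a (fst (s!k))" using k(2) by (auto simp: prefix_def)
      ultimately have "prefix (a@[2]) (fst (s!k))" using E4 by blast
      then obtain r2 where "fst (s!k) = (a@[2]) @ r2" by (auto simp: prefix_def)
      moreover obtain r1 where "fst (s!k) = (a@[1]) @ r1" using k(2) by (auto simp: prefix_def)
      ultimately show False by simp
    qed
  qed (use k0 p2 in auto)
qed

end



definition tlof :: "nat \<Rightarrow> (nat \<Rightarrow> nat) \<Rightarrow> (nat \<times> nat) list" where
  "tlof m p = concat (map (\<lambda>i. map (\<lambda>j. (i, j)) [0..<Suc (p i)]) (rev [1..<Suc m]))"

lemma steps_eq: "steps m \<omega> p b = map (\<lambda>(i,j). (b i j, \<omega> i)) (tlof m p)"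
  unfolding steps_def tlof_def by (simp add: map_concat comp_def)

lemma tlof_Suc: "tlof (Suc m) p = map (\<lambda>j. (Suc m, j)) [0..<Suc (p (Suc m))] @ tlof m p"
  unfolding tlof_def by simp

lemma tlof_0: "tlof 0 p = []" unfolding tlof_def by simp

lemma set_tlof: "set (tlof m p) = {(i,j). 1 \<le> i \<and> i \<le> m \<and> j \<le> p i}"
proof (induction m)
  case 0 then show ?case by (auto simp: tlof_0)
next
  case (Suc m) then show ?case by (auto simp: tlof_Suc le_Suc_eq image_iff)
qed

lemma sorted_tlof: "sorted_wrt (\<ge>) (map fst (tlof m p))"
proof (induction m)
  case 0 then show ?case by (simp add: tlof_0)
next
  case (Suc m)
  have "\<forall>x\<in>set (tlof m p). fst x \<le> Suc m" using set_tlof[of m p] by auto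
  then show ?case using Suc by (auto simp: tlof_Suc sorted_wrt_append sorted_wrt_map comp_def)
qed

lemma tlof_mono: "k < k' \<Longrightarrow> k' < length (tlof m p) \<Longrightarrow> fst (tlof m p ! k') \<le> fst (tlof m p ! k)"
  using sorted_tlof[of m p] by (auto simp: sorted_wrt_iff_nth_less)

fun rho :: "(var \<Rightarrow> 'a form) \<Rightarrow> nat \<Rightarrow> nat \<Rightarrow> nat" where
  "rho \<Omega> K 0 = (LEAST v. K < v \<and> \<Omega> v = \<Omega> 0)"
| "rho \<Omega> K (Suc n) = (LEAST v. rho \<Omega> K n < v \<and> \<Omega> v = \<Omega> (Suc n))"

lemma ex_big: "infinite {x. \<Omega> x = \<phi>} \<Longrightarrow> \<exists>v. (K::nat) < v \<and> \<Omega> v = \<phi>"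
  using infinite_nat_iff_unbounded by auto

lemma rho_props:
  assumes inf: "\<forall>\<phi>. infinite {x. \<Omega> x = \<phi>}"
  shows "K < rho \<Omega> K 0" "\<Omega> (rho \<Omega> K n) = \<Omega> n" "rho \<Omega> K n < rho \<Omega> K (Suc n)"
proof -
  show "K < rho \<Omega> K 0" using LeastI_ex[OF ex_big[OF inf[rule_format], of K "\<Omega> 0"]] by simp
  show "\<Omega> (rho \<Omega> K n) = \<Omega> n"
  proof (cases n)
    case 0 then show ?thesis using LeastI_ex[OF ex_big[OF inf[rule_format], of K "\<Omega> 0"]] by simp
  next
    case (Suc n') then show ?thesis
      using LeastI_ex[OF ex_big[OF inf[rule_format], of "rho \<Omega> K n'" "\<Omega> (Suc n')"]] by simp
  qed
  show "rho \<Omega> K n < rho \<Omega> K (Suc n)"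
    using LeastI_ex[OF ex_big[OF inf[rule_format], of "rho \<Omega> K n" "\<Omega> (Suc n)"]] by simp
qed

lemma rho_mono: assumes "\<forall>\<phi>. infinite {x. \<Omega> x = \<phi>}" shows "strict_mono (rho \<Omega> K)"
  using rho_props(3)[OF assms] by (simp add: strict_mono_Suc_iff)

lemma rho_big: assumes "\<forall>\<phi>. infinite {x. \<Omega> x = \<phi>}" shows "K < rho \<Omega> K n"
proof -
  have "rho \<Omega> K 0 \<le> rho \<Omega> K n" by (metis strict_mono_less_eq rho_mono assms zero_le)
  then show ?thesis using rho_props(1)[OF assms, of K] by (meson less_le_trans)
qed




lemma subt_append: "subt M a = Some S \<Longrightarrow> subt M (a@c) = subt S c"
proof (induction M arbitrary: a)
  case (Var x) then show ?case by (cases a) auto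
next
  case (Lam x P) then show ?case by (cases a) (auto split: if_splits)
next
  case (App P Q) then show ?case by (cases a) (auto split: if_splits)
qed

lemma bp_F: "blueprint \<Omega> M c = Some (F \<phi>) \<longleftrightarrow> (\<exists>x. subt M c = Some (Var x) \<and> x \<in> fvs M \<and> \<phi> = \<Omega> x)"
  unfolding blueprint_def by (auto split: option.splits trm.splits if_splits)

lemma bp_At: "subt M a = Some (App P Q) \<Longrightarrow> fvs (App P Q) \<subseteq> fvs M \<Longrightarrow> \<exists>\<psi>. blueprint \<Omega> M a = Some (At \<psi>)"
  unfolding blueprint_def by auto

theorem lemma2p16:
  fixes \<Omega> :: "var \<Rightarrow> 'a form"
    and M :: trm and m :: nat and \<omega> :: "nat \<Rightarrow> 'a form"
    and p :: "nat \<Rightarrow> nat" and b :: "nat \<Rightarrow> nat \<Rightarrow> addr"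
  assumes Omega_inf: "\<forall>\<phi>. infinite {x. \<Omega> x = \<phi>}"
    and M_NF: "M \<in> LambdaNF \<Omega>"
    and chain: "extr_chain (blueprint \<Omega> M) (steps m \<omega> p b) Map.empty"
  shows "\<forall>Y :: var list. sorted_wrt (<) Y \<and> length Y = m \<and> map \<Omega> Y = map \<omega> [1..<Suc m] \<longrightarrow>
           (\<exists>N. N \<in> LambdaNF \<Omega> \<and> tdom N = tdom M \<and> blueprint \<Omega> N = blueprint \<Omega> M \<and>
                (\<exists>\<phi>. has_type \<Omega> M \<phi> \<and> has_type \<Omega> N \<phi>) \<and> Free N = Y \<and>
                (\<forall>i\<in>{1..m}. {c. subt N c = Some (Var (Y ! (i - 1)))} = {b i j | j. j \<le> p i}))"
proof (intro allI impI)
  fix Y :: "var list"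
  assume "sorted_wrt (<) Y \<and> length Y = m \<and> map \<Omega> Y = map \<omega> [1..<Suc m]"
  then have Ys: "sorted_wrt (<) Y" and Yl: "length Y = m" and YO: "map \<Omega> Y = map \<omega> [1..<Suc m]" by auto
  define FV where "FV = fvs M"
  define t where "t = tlof m p"
  define s where "s = steps m \<omega> p b"
  define n where "n = length s"
  define A where "A = blueprint \<Omega> M"
  define Kc where "Kc = sum_list Y"
  define \<rho> where "\<rho> = rho \<Omega> Kc"
  define pos where "pos c = (SOME k. k < n \<and> fst (s!k) = c)" for c
  define \<sigma> where "\<sigma> c = (if \<exists>k<n. fst (s!k) = c then Y ! (fst (t ! pos c) - 1) else 0)" for c
  define N where "N = rnF FV \<sigma> \<rho> M"
  have s_eq: "s = map (\<lambda>(i,j). (b i j, \<omega> i)) t" unfolding s_def t_def by (rule steps_eq)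
  have nt: "n = length t" unfolding n_def s_eq by simp
  have s_nth: "fst (s!k) = b (fst (t!k)) (snd (t!k))" "snd (s!k) = \<omega> (fst (t!k))" if "k < n" for k
    using that unfolding nt s_eq by (auto simp: case_prod_beta)
  have t_rng: "1 \<le> fst (t!k) \<and> fst (t!k) \<le> m \<and> snd (t!k) \<le> p (fst (t!k))" if "k < n" for k
  proof -
    have "t!k \<in> set t" using that nt by simp
    then show ?thesis unfolding t_def set_tlof by (auto simp: case_prod_beta)
  qed
  obtain bs where bs: "length bs = Suc (length s)" "bs!0 = A" "bs!(length s) = Map.empty"
    "\<forall>k<length s. extr (bs!k) (fst (s!k)) (snd (s!k)) (bs!Suc k)"
    using chain_seq[OF chain] unfolding s_def A_def by blast
  interpret ch bs s using bs by unfold_locales auto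
  have MT: "is_term M" "beta_normal M" and "\<exists>\<phi>. has_type \<Omega> M \<phi>" using M_NF unfolding LambdaNF_def by auto
  then obtain \<phi>0 where Mty: "has_type \<Omega> M \<phi>0" by blast
  have Mhrm: "hrm M" using Mty by (cases rule: has_type.cases) auto
  have bvFV: "set (bvs M) \<inter> FV = {}" using MT unfolding is_term_def FV_def by auto
  have pos: "pos (fst (s!k)) = k" if "k < n" for k
  proof -
    have ex: "\<exists>k'. k' < n \<and> fst (s!k') = fst (s!k)" using that by blast
    have "pos (fst (s!k)) < n \<and> fst (s ! pos (fst (s!k))) = fst (s!k)"
      unfolding pos_def by (rule someI_ex[OF ex])
    then show ?thesis using C3 that unfolding n_def by (metis linorder_neqE_nat)
  qed
  have \<sigma>_s: "\<sigma> (fst (s!k)) = Y ! (fst (t!k) - 1)" if "k < n" for k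
    using that pos unfolding \<sigma>_def by auto
  have \<sigma>_le: "\<sigma> c \<le> Kc" for c
  proof (cases "\<exists>k<n. fst (s!k) = c")
    case True
    then obtain k where k: "k < n" "fst (s!k) = c" by blast
    have "fst (t!k) - 1 < length Y" using t_rng[OF k(1)] Yl by auto
    then show ?thesis using \<sigma>_s[OF k(1)] k(2) unfolding Kc_def by (simp add: elem_le_sum_list)
  qed (auto simp: \<sigma>_def)
  have \<rho>_big: "Kc < \<rho> x" for x unfolding \<rho>_def by (rule rho_big[OF Omega_inf])
  have \<sigma>\<rho>le: "\<sigma> c \<le> \<rho> x" for c x using \<sigma>_le[of c] \<rho>_big[of x] by simp
  have \<sigma>\<rho>: "\<forall>c x. \<sigma> c \<noteq> \<rho> x" using \<sigma>_le \<rho>_big by (metis not_le)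
  have \<rho>_mono: "strict_mono \<rho>" unfolding \<rho>_def by (rule rho_mono[OF Omega_inf])
  have \<rho>_inj: "inj \<rho>" using \<rho>_mono by (rule strict_mono_imp_inj_on)
  have \<rho>_ty: "\<forall>x. \<Omega> (\<rho> x) = \<Omega> x" unfolding \<rho>_def using rho_props(2)[OF Omega_inf] by blast
  have Y_big: "y < \<rho> x" if "y \<in> set Y" for y x
    using member_le_sum_list[OF that] \<rho>_big[of x] unfolding Kc_def by simp
  have LFM: "LF FV M = {fst (s!k) | k. k < n}"
  proof
    show "LF FV M \<subseteq> {fst (s!k) | k. k < n}"
    proof
      fix c assume "c \<in> LF FV M"
      then obtain x where "subt M c = Some (Var x)" "x \<in> FV" unfolding LF_def by auto
      then have "(bs!0) c = Some (F (\<Omega> x))" using bs(2) unfolding A_def FV_def by (simp add: bp_F)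
      from C2[OF this] show "c \<in> {fst (s!k) | k. k < n}" unfolding n_def by auto
    qed
  next
    show "{fst (s!k) | k. k < n} \<subseteq> LF FV M"
    proof
      fix c assume "c \<in> {fst (s!k) | k. k < n}"
      then obtain k where k: "k < n" "c = fst (s!k)" by auto
      have "A c = Some (F (snd (s!k)))" using C4[of k] k bs(2) unfolding n_def by simp
      then show "c \<in> LF FV M" unfolding A_def LF_def FV_def by (auto simp: bp_F)
    qed
  qed
  have leaf_ty: "\<Omega> (\<sigma> c) = \<Omega> x" if "subt M c = Some (Var x)" "x \<in> FV" for c x
  proof -
    have "c \<in> LF FV M" using that unfolding LF_def by auto
    then obtain k where k: "k < n" "c = fst (s!k)" using LFM by auto
    let ?i = "fst (t!k)"
    have i: "1 \<le> ?i" "?i \<le> m" using t_rng[OF k(1)] by auto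
    have "\<Omega> (Y ! (?i - 1)) = map \<Omega> Y ! (?i - 1)" using i Yl by simp
    also have "\<dots> = map \<omega> [1..<Suc m] ! (?i - 1)" using YO by simp
    also have "\<dots> = \<omega> ?i" using i by (simp del: upt_Suc)
    finally have 1: "\<Omega> (\<sigma> c) = \<omega> ?i" using \<sigma>_s[OF k(1)] k(2) by simp
    have "A c = Some (F (snd (s!k)))" using C4[of k] k bs(2) unfolding n_def by simp
    moreover have "A c = Some (F (\<Omega> x))" using that unfolding A_def FV_def by (simp add: bp_F)
    ultimately show ?thesis using 1 s_nth(2)[OF k(1)] by simp
  qed
  have subN: "subt N a = map_option (rnF FV (\<lambda>d. \<sigma> (a@d)) \<rho>) (subt M a)" for a
    unfolding N_def by (rule subt_rnF)
  have fvsS: "fvs (rnF FV (\<lambda>d. \<sigma> (a@d)) \<rho> S) = (\<lambda>d. \<sigma> (a@d)) ` LF FV S \<union> \<rho> ` (fvs S - FV)"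
    if "subt M a = Some S" for a S
  proof (rule fvs_rnF)
    show "set (bvs S) \<inter> FV = {}" using bvs_subt[OF that] bvFV by auto
  qed (use \<rho>_inj \<sigma>\<rho> in auto)
  have LF_sub: "a @ c \<in> LF FV M" if "subt M a = Some S" "c \<in> LF FV S" for a S c
    using that subt_append[OF that(1)] unfolding LF_def by auto
  have fvsN0: "fvs N = \<sigma> ` LF FV M" using fvsS[of "[]" M] unfolding N_def FV_def by simp
  have fvsN: "fvs N = set Y"
  proof -
    have "fvs N = \<sigma> ` LF FV M" using fvsS[of "[]" M] unfolding N_def FV_def by simp
    also have "\<dots> = set Y"
    proof
      show "\<sigma> ` LF FV M \<subseteq> set Y"
      proof
        fix y assume "y \<in> \<sigma> ` LF FV M"
        then obtain k where k: "k < n" "y = \<sigma> (fst (s!k))" using LFM by auto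
        then show "y \<in> set Y" using \<sigma>_s[OF k(1)] t_rng[OF k(1)] Yl by auto
      qed
    next
      show "set Y \<subseteq> \<sigma> ` LF FV M"
      proof
        fix y assume "y \<in> set Y"
        then obtain i where i: "i < m" "Y ! i = y" using Yl by (auto simp: in_set_conv_nth)
        have "(Suc i, 0) \<in> set t" unfolding t_def set_tlof using i by auto
        then obtain k where k: "k < n" "t ! k = (Suc i, 0)" using nt by (auto simp: in_set_conv_nth)
        have "\<sigma> (fst (s!k)) = y" using \<sigma>_s[OF k(1)] k i by simp
        then show "y \<in> \<sigma> ` LF FV M" using LFM k by auto
      qed
    qed
    finally show ?thesis .
  qed
  have bvS: "set (bvs S) \<inter> FV = {}" if "subt M a = Some S" for a S
    using bvs_subt[OF that] bvFV by auto
  have hrmN: "hrm N"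
    unfolding hrm_iff
  proof (intro allI impI)
    fix a S' assume "subt N a = Some S'"
    then obtain S where aS: "subt M a = Some S" and S': "S' = rnF FV (\<lambda>d. \<sigma> (a@d)) \<rho> S"
      using subN[of a] by auto
    have locS: "loc S" using Mhrm aS unfolding hrm_iff by blast
    show "loc S'"
    proof (cases S)
      case (Var x) then show ?thesis using S' by simp
    next
      case (Lam x P)
      have aP: "subt M (a@[1]) = Some P" using subt_append[OF aS, of "[1]"] Lam by simp
      have fP: "fvs (rnF FV (\<lambda>d. \<sigma> ((a@[1])@d)) \<rho> P) = (\<lambda>d. \<sigma> ((a@[1])@d)) ` LF FV P \<union> \<rho> ` (fvs P - FV)"
        by (rule fvsS[OF aP])
      have xF: "x \<notin> FV" using bvS[OF aS] Lam by auto
      have S'L: "S' = Lam (\<rho> x) (rnF FV (\<lambda>d. \<sigma> ((a@[1])@d)) \<rho> P)" using S' Lam by simp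
      have "x \<in> fvs P" "\<forall>y\<in>fvs P. y \<le> x" using locS Lam by auto
      then show ?thesis unfolding S'L loc.simps fP
        using xF \<sigma>\<rho>le \<rho>_mono
        by (auto simp: strict_mono_less_eq)
    next
      case (App P Q)
      have aP: "subt M (a@[1]) = Some P" using subt_append[OF aS, of "[1]"] App by simp
      have aQ: "subt M (a@[2]) = Some Q" using subt_append[OF aS, of "[2]"] App by simp
      have fP: "fvs (rnF FV (\<lambda>d. \<sigma> ((a@[1])@d)) \<rho> P) = (\<lambda>d. \<sigma> ((a@[1])@d)) ` LF FV P \<union> \<rho> ` (fvs P - FV)"
        by (rule fvsS[OF aP])
      have fQ: "fvs (rnF FV (\<lambda>d. \<sigma> ((a@[2])@d)) \<rho> Q) = (\<lambda>d. \<sigma> ((a@[2])@d)) ` LF FV Q \<union> \<rho> ` (fvs Q - FV)"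
        by (rule fvsS[OF aQ])
      have S'A: "S' = App (rnF FV (\<lambda>d. \<sigma> ((a@[1])@d)) \<rho> P) (rnF FV (\<lambda>d. \<sigma> ((a@[2])@d)) \<rho> Q)"
        using S' App by simp
      have locPQ: "\<forall>x\<in>fvs P. \<exists>y\<in>fvs Q. x \<le> y" using locS App by simp
      have noFV: "y \<notin> FV" if "x \<in> fvs P" "x \<notin> FV" "y \<in> fvs Q" "x \<le> y" for x y
      proof
        assume yF: "y \<in> FV"
        have "y < x"
          by (rule BF[OF Mhrm _ aS, of FV]) (use bvFV that yF App in \<open>auto simp: FV_def\<close>)
        then show False using that by simp
      qed
      have goal: "\<exists>w\<in>fvs (rnF FV (\<lambda>d. \<sigma> ((a@[2])@d)) \<rho> Q). z \<le> w"
        if z: "z \<in> fvs (rnF FV (\<lambda>d. \<sigma> ((a@[1])@d)) \<rho> P)" for z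
      proof -
        from z[unfolded fP] show ?thesis
        proof
          assume "z \<in> \<rho> ` (fvs P - FV)"
          then obtain x where x: "x \<in> fvs P" "x \<notin> FV" "z = \<rho> x" by auto
          then obtain y where y: "y \<in> fvs Q" "x \<le> y" using locPQ by auto
          have "y \<notin> FV" using noFV x y by auto
          then have "\<rho> y \<in> fvs (rnF FV (\<lambda>d. \<sigma> ((a@[2])@d)) \<rho> Q)" unfolding fQ using y by auto
          moreover have "z \<le> \<rho> y" using x y \<rho>_mono by (simp add: strict_mono_less_eq)
          ultimately show ?thesis by blast
        next
          assume "z \<in> (\<lambda>d. \<sigma> ((a@[1])@d)) ` LF FV P"
          then obtain c where c: "c \<in> LF FV P" "z = \<sigma> ((a@[1])@c)" by auto
          show ?thesis
          proof (cases "fvs (App P Q) \<subseteq> FV")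
            case False
            then obtain x where x: "x \<in> fvs (App P Q)" "x \<notin> FV" by auto
            have "\<exists>y. y \<in> fvs Q \<and> y \<notin> FV"
            proof (cases "x \<in> fvs Q")
              case True then show ?thesis using x by auto
            next
              case False
              then have xP: "x \<in> fvs P" using x by auto
              then obtain y where y: "y \<in> fvs Q" "x \<le> y" using locPQ by auto
              then show ?thesis using noFV[OF xP x(2) y] by auto
            qed
            then obtain y where y: "y \<in> fvs Q" "y \<notin> FV" by auto
            then have "\<rho> y \<in> fvs (rnF FV (\<lambda>d. \<sigma> ((a@[2])@d)) \<rho> Q)" unfolding fQ by auto
            moreover have "z \<le> \<rho> y" using c \<sigma>_le \<rho>_big[of y] by (metis le_less_trans less_imp_le)
            ultimately show ?thesis by blast
          next
            case True
            then obtain \<psi> where "A a = Some (At \<psi>)" using bp_At[OF aS[unfolded App]] unfolding A_def FV_def by blast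
            then obtain k0 where k0: "k0 < n" "prefix (a@[2]) (fst (s!k0))"
              and after: "\<forall>k<n. prefix (a@[1]) (fst (s!k)) \<longrightarrow> k0 < k"
              using C5[of a \<psi>] bs(2) unfolding n_def by auto
            have "(a@[1])@c \<in> LF FV M" by (rule LF_sub[OF aP c(1)])
            then obtain k where k: "k < n" "fst (s!k) = (a@[1])@c" using LFM by auto
            have "k0 < k" using after k by auto
            then have ik: "fst (t!k) \<le> fst (t!k0)" using tlof_mono[of k0 k m p] k nt unfolding t_def by auto
            have "Y ! (fst (t!k) - 1) \<le> Y ! (fst (t!k0) - 1)"
            proof -
              have "sorted Y" using Ys strict_sorted_iff by blast
              moreover have "fst (t!k0) - 1 < length Y" using t_rng[OF k0(1)] Yl by auto
              ultimately show ?thesis using ik by (auto simp: sorted_iff_nth_mono)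
            qed
            then have zle: "z \<le> \<sigma> (fst (s!k0))" using c(2) k(2)[symmetric] \<sigma>_s[OF k(1)] \<sigma>_s[OF k0(1)] by simp
            obtain r where r: "fst (s!k0) = (a@[2])@r" using k0(2) by (auto simp: prefix_def)
            have "fst (s!k0) \<in> LF FV M" using LFM k0 by auto
            then have "r \<in> LF FV Q" using r subt_append[OF aQ, of r] unfolding LF_def by auto
            then have "\<sigma> (fst (s!k0)) \<in> fvs (rnF FV (\<lambda>d. \<sigma> ((a@[2])@d)) \<rho> Q)" unfolding fQ r by auto
            then show ?thesis using zle by blast
          qed
        qed
      qed
      show ?thesis unfolding S'A loc.simps using goal by blast
    qed
  qed
  have tyS: "has_type \<Omega> (rnF FV (\<lambda>d. \<sigma> (a@d)) \<rho> S) \<psi>" if aS: "subt M a = Some S" and "has_type \<Omega> S \<psi>" for a S \<psi>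
  proof (rule TY[OF that(2)])
    have "subt N a = Some (rnF FV (\<lambda>d. \<sigma> (a@d)) \<rho> S)" using subN[of a] aS by simp
    then show "hrm (rnF FV (\<lambda>d. \<sigma> (a@d)) \<rho> S)" using hrm_subt[OF hrmN] by blast
    show "\<forall>c x. subt S c = Some (Var x) \<longrightarrow> x \<in> FV \<longrightarrow> \<Omega> (\<sigma> (a@c)) = \<Omega> x"
      using leaf_ty subt_append[OF aS] by auto
  qed (use \<rho>_ty in auto)
  have tyN: "has_type \<Omega> N \<phi>0" using tyS[of "[]" M \<phi>0] Mty unfolding N_def by simp
  have isN: "is_term N"
  proof -
    have d: "distinct (bvs M)" using MT(1) unfolding is_term_def by blast
    have "distinct (map \<rho> (bvs M))" using d \<rho>_inj distinct_map inj_on_subset by blast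
    then have d2: "distinct (bvs N)" unfolding N_def bvs_rnF .
    have "set (map \<rho> (bvs M)) \<inter> set Y = {}"
    proof (rule ccontr)
      assume "set (map \<rho> (bvs M)) \<inter> set Y \<noteq> {}"
      then obtain x where "\<rho> x \<in> set Y" by auto
      then show False using Y_big[of "\<rho> x" x] by simp
    qed
    then have "set (bvs N) \<inter> fvs N = {}" unfolding fvsN unfolding N_def bvs_rnF .
    with d2 show ?thesis unfolding is_term_def by blast
  qed
  have bnN: "beta_normal N" using MT unfolding N_def by (simp add: bn_rnF)
  have tdomN: "tdom N = tdom M" unfolding tdom_def using subN by auto
  have FreeN: "Free N = Y"
  proof -
    have "sorted Y" "distinct Y" using Ys strict_sorted_iff by auto
    then show ?thesis unfolding Free_def fvsN sorted_list_of_set_sort_remdups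
      by (simp add: distinct_remdups_id sorted_sort_id)
  qed
  have bpN: "blueprint \<Omega> N = blueprint \<Omega> M"
  proof
    fix a
    show "blueprint \<Omega> N a = blueprint \<Omega> M a"
    proof (cases "subt M a")
      case None then show ?thesis using subN[of a] unfolding blueprint_def by simp
    next
      case (Some S)
      note aS = Some
      have sN: "subt N a = Some (rnF FV (\<lambda>d. \<sigma> (a@d)) \<rho> S)" using subN[of a] aS by simp
      show ?thesis
      proof (cases S)
        case (Var x)
        show ?thesis
        proof (cases "x \<in> FV")
          case True
          have "a \<in> LF FV M" using aS Var True unfolding LF_def by auto
          then have "\<sigma> a \<in> fvs N" using fvsN0 by auto
          then show ?thesis using sN aS Var True leaf_ty[of a x] unfolding blueprint_def FV_def by simp
        next
          case False
          have "\<rho> x \<notin> fvs N" using Y_big[of "\<rho> x" x] unfolding fvsN by auto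
          then show ?thesis using sN aS Var False unfolding blueprint_def FV_def by simp
        qed
      next
        case (Lam x P) then show ?thesis using sN aS unfolding blueprint_def by simp
      next
        case (App P Q)
        have fS: "fvs (rnF FV (\<lambda>d. \<sigma> (a@d)) \<rho> S) = (\<lambda>d. \<sigma> (a@d)) ` LF FV S \<union> \<rho> ` (fvs S - FV)"
          by (rule fvsS[OF aS])
        have iff: "fvs (rnF FV (\<lambda>d. \<sigma> (a@d)) \<rho> S) \<subseteq> fvs N \<longleftrightarrow> fvs S \<subseteq> FV"
        proof
          assume h: "fvs (rnF FV (\<lambda>d. \<sigma> (a@d)) \<rho> S) \<subseteq> fvs N"
          show "fvs S \<subseteq> FV"
          proof
            fix x assume "x \<in> fvs S"
            show "x \<in> FV"
            proof (rule ccontr)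
              assume "x \<notin> FV"
              then have "\<rho> x \<in> fvs N" using h fS \<open>x \<in> fvs S\<close> by auto
              then show False using Y_big[of "\<rho> x" x] unfolding fvsN by auto
            qed
          qed
        next
          assume h: "fvs S \<subseteq> FV"
          show "fvs (rnF FV (\<lambda>d. \<sigma> (a@d)) \<rho> S) \<subseteq> fvs N"
          proof
            fix z assume "z \<in> fvs (rnF FV (\<lambda>d. \<sigma> (a@d)) \<rho> S)"
            then obtain c where c: "c \<in> LF FV S" "z = \<sigma> (a@c)" using fS h by auto
            have "a@c \<in> LF FV M" by (rule LF_sub[OF aS c(1)])
            then show "z \<in> fvs N" using c(2) fvsN0 by auto
          qed
        qed
        obtain \<psi> where tS: "has_type \<Omega> S \<psi>" using typed_subt[OF Mty aS] by blast
        have tS': "has_type \<Omega> (rnF FV (\<lambda>d. \<sigma> (a@d)) \<rho> S) \<psi>" by (rule tyS[OF aS tS])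
        have th1: "(THE \<psi>. has_type \<Omega> S \<psi>) = \<psi>" using tS ht_unique by blast
        have th2: "(THE \<psi>'. has_type \<Omega> (rnF FV (\<lambda>d. \<sigma> (a@d)) \<rho> S) \<psi>') = \<psi>" using tS' ht_unique by blast
        obtain P' Q' where S'eq: "rnF FV (\<lambda>d. \<sigma> (a@d)) \<rho> S = App P' Q'" using App by simp
        have L: "blueprint \<Omega> N a = (if fvs (App P' Q') \<subseteq> fvs N then Some (At \<psi>) else None)"
          using sN S'eq th2 unfolding blueprint_def by simp
        have R: "blueprint \<Omega> M a = (if fvs S \<subseteq> FV then Some (At \<psi>) else None)"
          using aS App th1 unfolding blueprint_def FV_def by simp
        show ?thesis unfolding L R using iff S'eq by simp
      qed
    qed
  qed
  have occ: "{c. subt N c = Some (Var (Y ! (i - 1)))} = {b i j | j. j \<le> p i}" if i: "i \<in> {1..m}" for i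
  proof
    show "{c. subt N c = Some (Var (Y ! (i - 1)))} \<subseteq> {b i j | j. j \<le> p i}"
    proof
      fix c assume "c \<in> {c. subt N c = Some (Var (Y ! (i - 1)))}"
      then have h: "subt N c = Some (Var (Y ! (i - 1)))" by simp
      obtain S where cS: "subt M c = Some S" and eqS: "rnF FV (\<lambda>d. \<sigma> (c@d)) \<rho> S = Var (Y ! (i - 1))"
        using subN[of c] h by (cases "subt M c") auto
      then obtain x where Sx: "S = Var x" by (cases S) auto
      have cx: "subt M c = Some (Var x)" using cS Sx by simp
      have v: "Y ! (i - 1) = (if x \<in> FV then \<sigma> c else \<rho> x)" using eqS Sx by (auto split: if_splits)
      have Yin: "Y ! (i - 1) \<in> set Y" using i Yl by auto
      have xF: "x \<in> FV"
      proof (rule ccontr)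
        assume "x \<notin> FV"
        then show False using v Y_big[OF Yin, of x] by simp
      qed
      then have "c \<in> LF FV M" using cx unfolding LF_def by auto
      then obtain k where k: "k < n" "c = fst (s!k)" using LFM by auto
      have eqY: "Y ! (i - 1) = Y ! (fst (t!k) - 1)" using v xF \<sigma>_s[OF k(1)] k(2) by simp
      have dY: "distinct Y" using Ys strict_sorted_iff by auto
      have "i - 1 < length Y" "fst (t!k) - 1 < length Y" using i Yl t_rng[OF k(1)] by auto
      then have "i - 1 = fst (t!k) - 1" using nth_eq_iff_index_eq[OF dY] eqY by blast
      then have "fst (t!k) = i" using i t_rng[OF k(1)] by auto
      then show "c \<in> {b i j | j. j \<le> p i}" using k s_nth(1)[OF k(1)] t_rng[OF k(1)] by auto
    qed
  next
    show "{b i j | j. j \<le> p i} \<subseteq> {c. subt N c = Some (Var (Y ! (i - 1)))}"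
    proof
      fix c assume "c \<in> {b i j | j. j \<le> p i}"
      then obtain j where j: "j \<le> p i" "c = b i j" by auto
      have "(i, j) \<in> set t" unfolding t_def set_tlof using i j by auto
      then obtain k where k: "k < n" "t ! k = (i, j)" using nt by (auto simp: in_set_conv_nth)
      have ck: "c = fst (s!k)" using s_nth(1)[OF k(1)] k j by simp
      then have "c \<in> LF FV M" using LFM k by auto
      then obtain x where x: "subt M c = Some (Var x)" "x \<in> FV" unfolding LF_def by auto
      have "subt N c = Some (Var (\<sigma> c))" using subN[of c] x by simp
      moreover have "\<sigma> c = Y ! (i - 1)" using \<sigma>_s[OF k(1)] ck k by simp
      ultimately show "c \<in> {c. subt N c = Some (Var (Y ! (i - 1)))}" by simp
    qed
  qed
  show "\<exists>N. N \<in> LambdaNF \<Omega> \<and> tdom N = tdom M \<and> blueprint \<Omega> N = blueprint \<Omega> M \<and>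
                (\<exists>\<phi>. has_type \<Omega> M \<phi> \<and> has_type \<Omega> N \<phi>) \<and> Free N = Y \<and>
                (\<forall>i\<in>{1..m}. {c. subt N c = Some (Var (Y ! (i - 1)))} = {b i j | j. j \<le> p i})"
  proof (intro exI[of _ N] conjI)
    show "N \<in> LambdaNF \<Omega>" unfolding LambdaNF_def using isN bnN tyN by auto
    show "tdom N = tdom M" by (rule tdomN)
    show "blueprint \<Omega> N = blueprint \<Omega> M" by (rule bpN)
    show "\<exists>\<phi>. has_type \<Omega> M \<phi> \<and> has_type \<Omega> N \<phi>" using Mty tyN by blast
    show "Free N = Y" by (rule FreeN)
    show "\<forall>i\<in>{1..m}. {c. subt N c = Some (Var (Y ! (i - 1)))} = {b i j | j. j \<le> p i}"
      using occ by blast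
  qed
qed


end
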